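(* Let $n,p\ge1$, $\mathbf{X}\in\mathbb{R}^{n\times p}$ fixed, $\beta^0\in\mathbb{R}^p$, $\mathbf{Y}=\mathbf{X}\beta^0+\varepsilon$ with $\varepsilon_i$ i.i.d. $\mathcal{N}(0,\sigma^2)$, $\sigma>0$. Let $\lambda>0$ with $\Omega_{\min}(\lambda)>0$, let $\hat\beta_{\mathrm{init}}$ be an estimator of $\beta^0$, let $\Delta_j>0$ be constants, and let $\mathcal{E}=\bigcap_{j=1}^p\{|a_{n,p;j}(\sigma)\sum_{k\neq j}(P_{\mathbf{X}})_{jk}(\hat\beta_{\mathrm{init};k}-\beta^0_k)|\le\Delta_j\}$. Let $\zeta\ge0$ and $P_{\mathrm{corr};j}=F_Z(P_j+\zeta)$. Then for every $0<\alpha<1$, $$\mathbb{P}[|V_\alpha|>0]\le F_Z\big(F_Z^{-1}(\alpha)-\zeta+2(2\pi)^{-1/2}\|a_{n,p}b(\lambda)\|_\infty\big)+\big(1-\mathbb{P}[\mathcal{E}]\big).$$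
   Context: $\hat\Sigma=n^{-1}\mathbf{X}^T\mathbf{X}$; $P_{\mathbf{X}}=\mathbf{X}^T(\mathbf{X}\mathbf{X}^T)^{-}\mathbf{X}$ (Moore–Penrose pseudo-inverse); $\theta^0=P_{\mathbf{X}}\beta^0$; $\Omega(\lambda)=(\hat\Sigma+\lambda I)^{-1}\hat\Sigma(\hat\Sigma+\lambda I)^{-1}$, $\Omega_{\min}(\lambda)=\min_j\Omega_{jj}(\lambda)$; $a_{n,p;j}(\sigma)=n^{1/2}\sigma^{-1}\Omega_{jj}(\lambda)^{-1/2}$. Ridge $\hat\beta=(\hat\Sigma+\lambda I)^{-1}n^{-1}\mathbf{X}^T\mathbf{Y}$; $b_j(\lambda)=\mathbb{E}[\hat\beta_j]-\theta^0_j$; $\|a_{n,p}b(\lambda)\|_\infty=\max_j a_{n,p;j}(\sigma)|b_j(\lambda)|$; $\hat\beta_{\mathrm{corr};j}=\hat\beta_j-\sum_{k\neq j}(P_{\mathbf{X}})_{jk}\hat\beta_{\mathrm{init};k}$. $P_j=2\big(1-\Phi\big((a_{n,p;j}(\sigma)|\hat\beta_{\mathrm{corr};j}|-\Delta_j)_+\big)\big)$, $\Phi$ the standard normal cdf. $F_Z(c)=\mathbb{P}[\min_{1\le j\le p}2(1-\Phi(a_{n,p;j}(\sigma)|Z_j|))\le c]$ with $(Z_1,\ldots,Z_p)\sim\mathcal{N}_p(0,n^{-1}\sigma^2\Omega(\lambda))$, and $F_Z^{-1}(\alpha)=\sup\{c:F_Z(c)\le\alpha\}$. $\hat S_\alpha=\{j:P_{\mathrm{corr};j}\le\alpha\}$,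 $S_0=\{j:\beta^0_j\neq0\}$, $V_\alpha=\hat S_\alpha\cap S_0^c$. *)

theory Defs
  imports "HOL-Probability.Probability"
begin

text \<open>Design matrix X :: real^'p^'n (n = CARD('n) rows, p = CARD('p) columns).\<close>

definition Sigma_hat :: "real^'p^'n \<Rightarrow> real^'p^'p" where
  "Sigma_hat X = (1 / real CARD('n)) *\<^sub>R (transpose X ** X)"

definition pinv :: "real^'m^'k \<Rightarrow> real^'k^'m" where
  "pinv A = (THE B. A ** B ** A = A \<and> B ** A ** B = B \<and>
                    transpose (A ** B) = A ** B \<and> transpose (B ** A) = B ** A)"

definition proj_X :: "real^'p^'n \<Rightarrow> real^'p^'p" where
  "proj_X X = transpose X ** pinv (X ** transpose X) ** X"

definition Omega :: "real^'p^'n \<Rightarrow> real \<Rightarrow> real^'p^'p" where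
  "Omega X lam =
     matrix_inv (Sigma_hat X + lam *\<^sub>R mat 1) ** Sigma_hat X ** matrix_inv (Sigma_hat X + lam *\<^sub>R mat 1)"

definition a_np :: "real^'p^'n \<Rightarrow> real \<Rightarrow> real \<Rightarrow> 'p \<Rightarrow> real" where
  "a_np X lam sg j = sqrt (real CARD('n)) / sg / sqrt (Omega X lam $ j $ j)"

definition ridge :: "real^'p^'n \<Rightarrow> real \<Rightarrow> real^'n \<Rightarrow> real^'p" where
  "ridge X lam Y = matrix_inv (Sigma_hat X + lam *\<^sub>R mat 1) *v ((1 / real CARD('n)) *\<^sub>R (transpose X *v Y))"

definition Phi :: "real \<Rightarrow> real" where
  "Phi x = measure (density lborel std_normal_density) {..x}"

definition gauss_law :: "real \<Rightarrow> real \<Rightarrow> real measure" where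
  "gauss_law m v = (if v = 0 then return borel m else density lborel (normal_density m (sqrt v)))"

text \<open>Z is a centred multivariate normal vector N_p(0, C) on N (Cramer--Wold definition).\<close>
definition centered_gaussian_vec :: "'b measure \<Rightarrow> ('b \<Rightarrow> real^'p) \<Rightarrow> real^'p^'p \<Rightarrow> bool" where
  "centered_gaussian_vec N Z C \<longleftrightarrow> Z \<in> borel_measurable N \<and>
     (\<forall>u. distr N borel (\<lambda>\<omega>. u \<bullet> Z \<omega>) = gauss_law 0 (u \<bullet> (C *v u)))"

text \<open>F_Z(c) computed from a vector Z ~ N_p(0, n^-1 sg^2 Omega(lambda)) on N.\<close>
definition FZ :: "'b measure \<Rightarrow> ('b \<Rightarrow> real^'p) \<Rightarrow> real^'p^'n \<Rightarrow> real \<Rightarrow> real \<Rightarrow> real \<Rightarrow> real" where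
  "FZ N Z X lam sg c =
     measure N {\<omega> \<in> space N. Min (range (\<lambda>j. 2 * (1 - Phi (a_np X lam sg j * \<bar>Z \<omega> $ j\<bar>)))) \<le> c}"

definition FZinv :: "(real \<Rightarrow> real) \<Rightarrow> real \<Rightarrow> real" where
  "FZinv F alpha = Sup {c. F c \<le> alpha}"

end

theory Submission
  imports Defs
begin


inductive_set trig :: "(real^'p \<Rightarrow> complex) set" where
  cis: "(\<lambda>z. cis (u \<bullet> z)) \<in> trig"
| add: "f \<in> trig \<Longrightarrow> g \<in> trig \<Longrightarrow> (\<lambda>z. f z + g z) \<in> trig"
| scale: "f \<in> trig \<Longrightarrow> (\<lambda>z. c * f z) \<in> trig"

lemma trig_const: "(\<lambda>z. c) \<in> trig"
  using trig.scale[OF trig.cis[of 0], of c] by simp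

lemma trig_mult_cis: "g \<in> trig \<Longrightarrow> (\<lambda>z. cis (u \<bullet> z) * g z) \<in> trig"
proof (induction g rule: trig.induct)
  case (cis v)
  have "(\<lambda>z. cis ((u+v) \<bullet> z)) \<in> trig" by (rule trig.cis)
  then show ?case by (simp add: inner_add_left cis_mult)
next
  case (add f g) then show ?case using trig.add[OF add.IH] by (simp add: distrib_left)
next
  case (scale f c) then show ?case using trig.scale[OF scale.IH, of c] by (simp add: ac_simps)
qed

lemma trig_mult: "f \<in> trig \<Longrightarrow> g \<in> trig \<Longrightarrow> (\<lambda>z. f z * g z) \<in> trig"
proof (induction f rule: trig.induct)
  case (cis u) then show ?case by (rule trig_mult_cis)
next
  case (add f h) then show ?case using trig.add[OF add.IH] by (simp add: distrib_right)
next
  case (scale f c) then show ?case using trig.scale[OF scale.IH, of c] by (simp add: ac_simps)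
qed

lemma trig_sum: "finite I \<Longrightarrow> (\<And>i. i \<in> I \<Longrightarrow> f i \<in> trig) \<Longrightarrow> (\<lambda>z. \<Sum>i\<in>I. f i z) \<in> trig"
  by (induction I rule: finite_induct) (auto intro: trig.add trig_const)

lemma trig_prod: "finite I \<Longrightarrow> (\<And>i. i \<in> I \<Longrightarrow> f i \<in> trig) \<Longrightarrow> (\<lambda>z. \<Prod>i\<in>I. f i z) \<in> trig"
  by (induction I rule: finite_induct) (auto intro: trig_mult trig_const)

lemma trig_bounded: "f \<in> trig \<Longrightarrow> \<exists>B. \<forall>z. norm (f z) \<le> B"
proof (induction f rule: trig.induct)
  case (cis u) then show ?case by (auto intro!: exI[of _ 1])
next
  case (add f g)
  then obtain B1 B2 where "\<forall>z. norm (f z) \<le> B1" "\<forall>z. norm (g z) \<le> B2" by auto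
  then show ?case by (auto intro!: exI[of _ "B1+B2"] intro: norm_triangle_le add_mono)
next
  case (scale f c)
  then obtain B where B: "\<forall>z. norm (f z) \<le> B" by auto
  show ?case
    using B by (intro exI[of _ "norm c * B"]) (auto simp: norm_mult intro: mult_left_mono)
qed

lemma trig_cont: "f \<in> trig \<Longrightarrow> continuous_on UNIV f"
  by (induction f rule: trig.induct) (auto intro!: continuous_intros)

lemma complex_sin2: "complex_of_real (sin t) = (1/(2*\<i>)) * cis t + (-1/(2*\<i>)) * cis (-t)"
  by (simp add: complex_eq_iff)

definition sv :: "real \<Rightarrow> real^'p \<Rightarrow> real^'p" where
  "sv c z = (\<chi> j. sin (c * z $ j))"

lemma trig_sin: "(\<lambda>z. complex_of_real (sin (c * (z::real^'p) $ j))) \<in> trig"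
proof -
  have e: "\<And>z. complex_of_real (sin (c * z $ j)) =
     (1/(2*\<i>)) * cis ((c *\<^sub>R axis j 1) \<bullet> z) + (-1/(2*\<i>)) * cis ((-(c *\<^sub>R axis j 1)) \<bullet> z)"
    by (simp add: complex_sin2 inner_axis')
  show ?thesis unfolding e by (intro trig.add trig.scale trig.cis)
qed

lemma trig_poly:
  assumes "real_polynomial_function (Q :: real^'p \<Rightarrow> real)"
  shows "(\<lambda>z. complex_of_real (Q (sv c z))) \<in> trig"
  using assms
proof (induction Q rule: real_polynomial_function.induct)
  case (linear f)
  then interpret bounded_linear f .
  have e: "\<And>s. f s = (\<Sum>j\<in>UNIV. s $ j * f (axis j 1))"
  proof -
    fix s :: "real^'p"
    have "f s = f (\<Sum>j\<in>UNIV. (s$j) *\<^sub>R axis j 1)"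
      using basis_expansion[of s] by (simp add: scalar_mult_eq_scaleR)
    also have "\<dots> = (\<Sum>j\<in>UNIV. s $ j * f (axis j 1))" by (simp add: sum scale)
    finally show "f s = (\<Sum>j\<in>UNIV. s $ j * f (axis j 1))" .
  qed
  have "(\<lambda>z. \<Sum>j\<in>UNIV. complex_of_real (f (axis j 1)) * complex_of_real (sin (c * z $ j))) \<in> trig"
    by (intro trig_sum trig.scale trig_sin) auto
  moreover have "(\<lambda>z. complex_of_real (f (sv c z))) = (\<lambda>z. \<Sum>j\<in>UNIV. complex_of_real (f (axis j 1)) * complex_of_real (sin (c * z $ j)))"
  proof
    fix z
    show "complex_of_real (f (sv c z)) = (\<Sum>j\<in>UNIV. complex_of_real (f (axis j 1)) * complex_of_real (sin (c * z $ j)))"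
      by (subst e) (simp add: sv_def mult.commute)
  qed
  ultimately show ?case by simp
next
  case (const c) then show ?case by (rule trig_const)
next
  case (add f g) then show ?case using trig.add[OF add.IH] by simp
next
  case (mult f g) then show ?case using trig_mult[OF mult.IH] by simp
qed




lemma trig_integrable:
  assumes M: "prob_space M" and V: "V \<in> borel_measurable M" and f: "f \<in> trig"
  shows "integrable M (\<lambda>\<omega>. f (V \<omega>))"
proof -
  interpret prob_space M by fact
  obtain B where B: "\<forall>z. norm (f z) \<le> B" using trig_bounded[OF f] by auto
  have fm: "f \<in> borel_measurable borel"
    using trig_cont[OF f] by (rule borel_measurable_continuous_onI)
  show ?thesis
    by (rule integrable_const_bound[where B=B]) (use B fm V in auto)
qed

lemma trig_integral_eq:
  fixes V :: "'a \<Rightarrow> real^'p" and V' :: "'b \<Rightarrow> real^'p"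
  assumes M: "prob_space M" and N: "prob_space N"
    and V: "V \<in> borel_measurable M" and V': "V' \<in> borel_measurable N"
    and eq: "\<And>u. distr M borel (\<lambda>\<omega>. u \<bullet> V \<omega>) = distr N borel (\<lambda>\<omega>. u \<bullet> V' \<omega>)"
    and f: "f \<in> trig"
  shows "(\<integral>\<omega>. f (V \<omega>) \<partial>M) = (\<integral>\<omega>. f (V' \<omega>) \<partial>N)"
  using f
proof (induction f rule: trig.induct)
  case (cis u)
  have m1: "(\<lambda>\<omega>. u \<bullet> V \<omega>) \<in> measurable M borel" using V by measurable
  have m2: "(\<lambda>\<omega>. u \<bullet> V' \<omega>) \<in> measurable N borel" using V' by measurable
  have c: "(\<lambda>x. cis x) \<in> borel_measurable borel"
    by (intro borel_measurable_continuous_onI continuous_intros)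
  have "(\<integral>\<omega>. cis (u \<bullet> V \<omega>) \<partial>M) = (\<integral>x. cis x \<partial>distr M borel (\<lambda>\<omega>. u \<bullet> V \<omega>))"
    by (rule integral_distr[OF m1 c, symmetric])
  also have "\<dots> = (\<integral>x. cis x \<partial>distr N borel (\<lambda>\<omega>. u \<bullet> V' \<omega>))" by (simp add: eq)
  also have "\<dots> = (\<integral>\<omega>. cis (u \<bullet> V' \<omega>) \<partial>N)"
    by (rule integral_distr[OF m2 c])
  finally show ?case .
next
  case (add f g)
  then show ?case
    by (simp add: Bochner_Integration.integral_add trig_integrable[OF M V] trig_integrable[OF N V'])
next
  case (scale f c)
  then show ?case by simp
qed

lemma approx_int:
  fixes f g :: "'a \<Rightarrow> real"
  assumes M: "prob_space M" and "integrable M f" "integrable M g"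
    and "\<And>x. x \<in> space M \<Longrightarrow> \<bar>f x - g x\<bar> \<le> e"
  shows "\<bar>(\<integral>x. f x \<partial>M) - (\<integral>x. g x \<partial>M)\<bar> \<le> e"
proof -
  interpret prob_space M by fact
  have "\<bar>(\<integral>x. f x \<partial>M) - (\<integral>x. g x \<partial>M)\<bar> = \<bar>\<integral>x. f x - g x \<partial>M\<bar>"
    using assms by simp
  also have "\<dots> \<le> (\<integral>x. \<bar>f x - g x\<bar> \<partial>M)"
    using integral_norm_bound[of M "\<lambda>x. f x - g x"] by simp
  also have "\<dots> \<le> (\<integral>x. e \<partial>M)"
    by (rule integral_mono) (use assms in auto)
  also have "\<dots> = e" by (simp add: prob_space)
  finally show ?thesis .
qed

lemma sv_cube: "sv c z \<in> cbox (- 1) (1::real^'p)"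
  by (auto simp: mem_box_cart sv_def abs_le_iff[symmetric])

lemma cont_integral_eq:
  fixes V :: "'a \<Rightarrow> real^'p" and V' :: "'b \<Rightarrow> real^'p" and H :: "real^'p \<Rightarrow> real"
  assumes M: "prob_space M" and N: "prob_space N"
    and V: "V \<in> borel_measurable M" and V': "V' \<in> borel_measurable N"
    and eq: "\<And>u. distr M borel (\<lambda>\<omega>. u \<bullet> V \<omega>) = distr N borel (\<lambda>\<omega>. u \<bullet> V' \<omega>)"
    and H: "continuous_on UNIV H" "\<And>s. \<bar>H s\<bar> \<le> 1"
  shows "(\<integral>\<omega>. H (sv c (V \<omega>)) \<partial>M) = (\<integral>\<omega>. H (sv c (V' \<omega>)) \<partial>N)"
proof -
  interpret M: prob_space M by fact
  interpret N: prob_space N by fact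
  have svm: "sv c \<in> borel_measurable borel"
    unfolding sv_def by (intro borel_measurable_continuous_onI continuous_intros)
  have Hm: "H \<in> borel_measurable borel" using H(1) by (rule borel_measurable_continuous_onI)
  have W1: "(\<lambda>\<omega>. H (sv c (V \<omega>))) \<in> borel_measurable M"
    using measurable_compose[OF measurable_compose[OF V svm] Hm] by simp
  have W2: "(\<lambda>\<omega>. H (sv c (V' \<omega>))) \<in> borel_measurable N"
    using measurable_compose[OF measurable_compose[OF V' svm] Hm] by simp
  have iH1: "integrable M (\<lambda>\<omega>. H (sv c (V \<omega>)))"
    by (rule M.integrable_const_bound[where B=1]) (use H(2) W1 in auto)
  have iH2: "integrable N (\<lambda>\<omega>. H (sv c (V' \<omega>)))"
    by (rule N.integrable_const_bound[where B=1]) (use H(2) W2 in auto)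
  have key: "\<bar>(\<integral>\<omega>. H (sv c (V \<omega>)) \<partial>M) - (\<integral>\<omega>. H (sv c (V' \<omega>)) \<partial>N)\<bar> \<le> 2 * e" if e: "e > 0" for e
  proof -
    have "compact (cbox (- 1) (1::real^'p))" by simp
    moreover have "continuous_on (cbox (- 1) (1::real^'p)) H" using H(1) continuous_on_subset by blast
    ultimately obtain Q where Q: "real_polynomial_function Q"
      and Qa: "\<And>s. s \<in> cbox (- 1) (1::real^'p) \<Longrightarrow> \<bar>H s - Q s\<bar> < e"
      using Stone_Weierstrass_real_polynomial_function e by blast
    have Qc: "continuous_on UNIV Q"
      using Q continuous_on_polymonial_function real_polynomial_function_eq by blast
    have Qm: "Q \<in> borel_measurable borel" using Qc by (rule borel_measurable_continuous_onI)
    have Qb: "\<bar>Q (sv c z)\<bar> \<le> 1 + e" for z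
      using Qa[OF sv_cube[of c z]] H(2)[of "sv c z"] by linarith
    have X1: "(\<lambda>\<omega>. Q (sv c (V \<omega>))) \<in> borel_measurable M"
      using measurable_compose[OF measurable_compose[OF V svm] Qm] by simp
    have X2: "(\<lambda>\<omega>. Q (sv c (V' \<omega>))) \<in> borel_measurable N"
      using measurable_compose[OF measurable_compose[OF V' svm] Qm] by simp
    have iQ1: "integrable M (\<lambda>\<omega>. Q (sv c (V \<omega>)))"
      by (rule M.integrable_const_bound[where B="1+e"]) (use Qb X1 in auto)
    have iQ2: "integrable N (\<lambda>\<omega>. Q (sv c (V' \<omega>)))"
      by (rule N.integrable_const_bound[where B="1+e"]) (use Qb X2 in auto)
    have "complex_of_real (\<integral>\<omega>. Q (sv c (V \<omega>)) \<partial>M) = (\<integral>\<omega>. complex_of_real (Q (sv c (V \<omega>))) \<partial>M)"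
      by simp
    also have "\<dots> = (\<integral>\<omega>. complex_of_real (Q (sv c (V' \<omega>))) \<partial>N)"
      using trig_integral_eq[OF M N V V' eq trig_poly[OF Q, of c]] by simp
    also have "\<dots> = complex_of_real (\<integral>\<omega>. Q (sv c (V' \<omega>)) \<partial>N)" by simp
    finally have QQ: "(\<integral>\<omega>. Q (sv c (V \<omega>)) \<partial>M) = (\<integral>\<omega>. Q (sv c (V' \<omega>)) \<partial>N)" by simp
    have a1: "\<bar>(\<integral>\<omega>. H (sv c (V \<omega>)) \<partial>M) - (\<integral>\<omega>. Q (sv c (V \<omega>)) \<partial>M)\<bar> \<le> e"
      by (rule approx_int[OF M iH1 iQ1]) (intro less_imp_le Qa sv_cube)
    have a2: "\<bar>(\<integral>\<omega>. H (sv c (V' \<omega>)) \<partial>N) - (\<integral>\<omega>. Q (sv c (V' \<omega>)) \<partial>N)\<bar> \<le> e"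
      by (rule approx_int[OF N iH2 iQ2]) (intro less_imp_le Qa sv_cube)
    show ?thesis using a1 a2 QQ by linarith
  qed
  have "\<bar>(\<integral>\<omega>. H (sv c (V \<omega>)) \<partial>M) - (\<integral>\<omega>. H (sv c (V' \<omega>)) \<partial>N)\<bar> \<le> 0"
  proof (rule field_le_epsilon)
    fix e :: real assume "0 < e"
    then show "\<bar>(\<integral>\<omega>. H (sv c (V \<omega>)) \<partial>M) - (\<integral>\<omega>. H (sv c (V' \<omega>)) \<partial>N)\<bar> \<le> 0 + e"
      using key[of "e/2"] by simp
  qed
  then show ?thesis by simp
qed




lemma min1_lim:
  assumes "(m::real) > 0"
  shows "(\<lambda>k. min 1 (real k * m)) \<longlonglongrightarrow> 1"
proof (rule tendsto_eventually)
  obtain K :: nat where K: "1 / m \<le> real K" using real_arch_simple by blast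
  show "\<forall>\<^sub>F k in sequentially. min 1 (real k * m) = 1"
    unfolding eventually_sequentially
  proof (intro exI allI impI)
    fix k assume "K \<le> k"
    then have "1 / m \<le> real k" using K by linarith
    then have "1 \<le> real k * m" using assms by (simp add: field_simps)
    then show "min 1 (real k * m) = 1" by simp
  qed
qed

definition Hk :: "real^'p \<Rightarrow> real^'p \<Rightarrow> nat \<Rightarrow> real^'p \<Rightarrow> real" where
  "Hk a b k s = (\<Prod>j\<in>UNIV. min 1 (real k * max 0 (min (s$j - a$j) (b$j - s$j))))"

lemma Hk_lim: "(\<lambda>k. Hk a b k s) \<longlonglongrightarrow> indicator (box a b) s"
proof (cases "s \<in> box a b")
  case True
  then have pos: "\<And>j. max 0 (min (s$j - a$j) (b$j - s$j)) > 0" by (auto simp: mem_box_cart)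
  have lj: "\<And>j. (\<lambda>k. min 1 (real k * max 0 (min (s$j - a$j) (b$j - s$j)))) \<longlonglongrightarrow> 1"
    by (rule min1_lim[OF pos])
  have "(\<lambda>k. Hk a b k s) \<longlonglongrightarrow> 1"
    unfolding Hk_def using tendsto_prod[where S=UNIV, OF lj] by simp
  then show ?thesis using True by simp
next
  case False
  then obtain j where "\<not> (a$j < s$j \<and> s$j < b$j)" by (auto simp: mem_box_cart)
  then have z: "max 0 (min (s$j - a$j) (b$j - s$j)) = 0" by auto
  have "Hk a b k s = 0" for k unfolding Hk_def
    apply (rule prod_zero)
     apply simp
    apply (rule bexI[of _ j])
    using z by auto
  then show ?thesis using False by simp
qed

lemma Hk_cont: "continuous_on UNIV (Hk a b k)"
  unfolding Hk_def by (intro continuous_intros)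

lemma Hk_bound: "\<bar>Hk a b k s\<bar> \<le> 1"
proof -
  have "0 \<le> Hk a b k s" unfolding Hk_def by (intro prod_nonneg) auto
  moreover have "Hk a b k s \<le> 1" unfolding Hk_def by (intro prod_le_1) auto
  ultimately show ?thesis by simp
qed

lemma box_prob_W:
  fixes V :: "'a \<Rightarrow> real^'p" and V' :: "'b \<Rightarrow> real^'p"
  assumes M: "prob_space M" and N: "prob_space N"
    and V: "V \<in> borel_measurable M" and V': "V' \<in> borel_measurable N"
    and eq: "\<And>u. distr M borel (\<lambda>\<omega>. u \<bullet> V \<omega>) = distr N borel (\<lambda>\<omega>. u \<bullet> V' \<omega>)"
  shows "measure M {\<omega>\<in>space M. sv c (V \<omega>) \<in> box a b} = measure N {\<omega>\<in>space N. sv c (V' \<omega>) \<in> box a b}"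
proof -
  have svm: "sv c \<in> borel_measurable borel"
    unfolding sv_def by (intro borel_measurable_continuous_onI continuous_intros)
  have Hm: "Hk a b k \<in> borel_measurable borel" for k by (rule borel_measurable_continuous_onI[OF Hk_cont])
  have lim: "(\<lambda>k. \<integral>\<omega>. Hk a b k (sv c (X \<omega>)) \<partial>L) \<longlonglongrightarrow> measure L {\<omega>\<in>space L. sv c (X \<omega>) \<in> box a b}"
    if L: "prob_space L" and X: "X \<in> borel_measurable L" for L :: "'c measure" and X
  proof -
    interpret prob_space L by fact
    have W: "(\<lambda>\<omega>. sv c (X \<omega>)) \<in> borel_measurable L" using measurable_compose[OF X svm] by simp
    have "(\<lambda>k. \<integral>\<omega>. Hk a b k (sv c (X \<omega>)) \<partial>L) \<longlonglongrightarrow> (\<integral>\<omega>. indicator (box a b) (sv c (X \<omega>)) \<partial>L)"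
    proof (rule integral_dominated_convergence[where w="\<lambda>_. 1"])
      show "(\<lambda>\<omega>. indicator (box a b) (sv c (X \<omega>)) :: real) \<in> borel_measurable L"
        using W by measurable
      show "(\<lambda>\<omega>. Hk a b k (sv c (X \<omega>))) \<in> borel_measurable L" for k
        using measurable_compose[OF W Hm] by simp
      show "integrable L (\<lambda>_. 1::real)" by simp
      show "AE \<omega> in L. (\<lambda>k. Hk a b k (sv c (X \<omega>))) \<longlonglongrightarrow> indicator (box a b) (sv c (X \<omega>))"
        by (intro AE_I2 Hk_lim)
      show "AE \<omega> in L. norm (Hk a b k (sv c (X \<omega>))) \<le> 1" for k
        by (intro AE_I2) (simp add: Hk_bound)
    qed
    also have "(\<integral>\<omega>. indicator (box a b) (sv c (X \<omega>)) \<partial>L) = (\<integral>\<omega>. indicator {\<omega>\<in>space L. sv c (X \<omega>) \<in> box a b} \<omega> \<partial>L)"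
      by (intro Bochner_Integration.integral_cong) (auto simp: indicator_def)
    also have "\<dots> = measure L {\<omega>\<in>space L. sv c (X \<omega>) \<in> box a b}"
      by (simp add: Int_absorb2 subset_eq)
    finally show ?thesis .
  qed
  have "(\<lambda>k. (\<integral>\<omega>. Hk a b k (sv c (V \<omega>)) \<partial>M)) = (\<lambda>k. \<integral>\<omega>. Hk a b k (sv c (V' \<omega>)) \<partial>N)"
    by (rule ext) (rule cont_integral_eq[OF M N V V' eq Hk_cont Hk_bound])
  then have "(\<lambda>k. \<integral>\<omega>. Hk a b k (sv c (V' \<omega>)) \<partial>N) \<longlonglongrightarrow> measure M {\<omega>\<in>space M. sv c (V \<omega>) \<in> box a b}"
    using lim[OF M V] by simp
  then show ?thesis using LIMSEQ_unique lim[OF N V'] by blast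
qed




lemma meas_diff_le:
  assumes "finite_measure L" "A \<in> sets L" "A' \<in> sets L" "D \<in> sets L"
    "A \<subseteq> A' \<union> D" "A' \<subseteq> A \<union> D"
  shows "\<bar>measure L A - measure L A'\<bar> \<le> measure L D"
proof -
  interpret finite_measure L by fact
  have "measure L A \<le> measure L (A' \<union> D)" using assms by (intro finite_measure_mono) auto
  also have "\<dots> \<le> measure L A' + measure L D" using assms by (intro measure_Un_le) auto
  finally have 1: "measure L A \<le> measure L A' + measure L D" .
  have "measure L A' \<le> measure L (A \<union> D)" using assms by (intro finite_measure_mono) auto
  also have "\<dots> \<le> measure L A + measure L D" using assms by (intro measure_Un_le) auto
  finally show ?thesis using 1 by linarith
qed

definition Ck :: "nat \<Rightarrow> (real^'p) set" where
  "Ck k = cbox (- vec (real k + 1)) (vec (real k + 1))"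

lemma mem_Ck: "z \<in> Ck k \<longleftrightarrow> (\<forall>j. \<bar>z $ j\<bar> \<le> real k + 1)"
  apply (auto simp: Ck_def mem_box_cart abs_le_iff)
   apply (erule_tac x=j in allE, linarith)
  apply (erule_tac x=i in allE, linarith)
  done

lemma Ck_mono: "Ck n \<subseteq> Ck (Suc n)"
proof
  fix z :: "real^'p" assume "z \<in> Ck n"
  then have h: "\<bar>z$j\<bar> \<le> real n + 1" for j by (simp add: mem_Ck)
  have "\<bar>z$j\<bar> \<le> real (Suc n) + 1" for j
  proof -
    have "\<bar>z$j\<bar> \<le> real n + 1" by (rule h)
    also have "\<dots> \<le> real (Suc n) + 1" by simp
    finally show ?thesis .
  qed
  then show "z \<in> Ck (Suc n)" by (simp add: mem_Ck)
qed

lemma tail_zero: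
  fixes X :: "'c \<Rightarrow> real^'p"
  assumes L: "prob_space L" and X: "X \<in> borel_measurable L"
  shows "(\<lambda>k. measure L {\<omega>\<in>space L. X \<omega> \<notin> Ck k}) \<longlonglongrightarrow> 0"
proof -
  interpret prob_space L by fact
  have ms: "{\<omega>\<in>space L. X \<omega> \<notin> Ck k} \<in> sets L" for k
  proof -
    have "{\<omega>\<in>space L. X \<omega> \<notin> Ck k} = X -` (- Ck k) \<inter> space L" by auto
    also have "\<dots> \<in> sets L"
      by (rule measurable_sets[OF X]) (auto simp: Ck_def intro!: borel_open)
    finally show ?thesis .
  qed
  have dec: "decseq (\<lambda>k. {\<omega>\<in>space L. X \<omega> \<notin> Ck k})"
    by (rule decseq_SucI) (use Ck_mono in blast)
  have emp: "(\<Inter>k. {\<omega>\<in>space L. X \<omega> \<notin> Ck k}) = {}"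
  proof (rule ccontr)
    assume "(\<Inter>k. {\<omega>\<in>space L. X \<omega> \<notin> Ck k}) \<noteq> {}"
    then obtain \<omega> where w: "\<And>k. X \<omega> \<notin> Ck k" by auto
    obtain k :: nat where "norm (X \<omega>) \<le> real k" using real_arch_simple by blast
    then have "X \<omega> \<in> Ck k" unfolding mem_Ck
      using component_le_norm_cart[of "X \<omega>"] by (meson add_increasing2 order_trans zero_le_one)
    then show False using w by blast
  qed
  show ?thesis
    using Lim_measure_decseq[of "\<lambda>k. {\<omega>\<in>space L. X \<omega> \<notin> Ck k}" L] ms dec emp by auto
qed

lemma sin_equiv:
  assumes c: "c = 1 / (real k + 1)" and z: "\<bar>z\<bar> \<le> real k + 1" and a: "\<bar>a\<bar> \<le> real k + 1"
  shows "sin (c * a) < sin (c * z) \<longleftrightarrow> a < z"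
proof -
  have cp: "c > 0" using c by simp
  have b1: "\<bar>c * t\<bar> \<le> 1" if "\<bar>t\<bar> \<le> real k + 1" for t
  proof -
    have "\<bar>c * t\<bar> = c * \<bar>t\<bar>" using cp by (simp add: abs_mult)
    also have "\<dots> \<le> c * (real k + 1)" by (rule mult_left_mono) (use that cp in auto)
    also have "\<dots> = 1" using c by simp
    finally show ?thesis .
  qed
  have p: "1 \<le> pi / 2" using pi_ge_two by simp
  have "sin (c * a) < sin (c * z) \<longleftrightarrow> c * a < c * z"
    using b1[OF z] b1[OF a] p by (intro sin_mono_less_eq) (auto simp: abs_le_iff)
  also have "\<dots> \<longleftrightarrow> a < z" using cp by simp
  finally show ?thesis .
qed

lemma box_prob_V:
  fixes V :: "'a \<Rightarrow> real^'p" and V' :: "'b \<Rightarrow> real^'p"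
  assumes M: "prob_space M" and N: "prob_space N"
    and V: "V \<in> borel_measurable M" and V': "V' \<in> borel_measurable N"
    and eq: "\<And>u. distr M borel (\<lambda>\<omega>. u \<bullet> V \<omega>) = distr N borel (\<lambda>\<omega>. u \<bullet> V' \<omega>)"
  shows "measure M {\<omega>\<in>space M. V \<omega> \<in> box a b} = measure N {\<omega>\<in>space N. V' \<omega> \<in> box a b}"
proof -
  interpret M: prob_space M by fact
  interpret N: prob_space N by fact
  obtain K :: nat where K: "norm a + norm b \<le> real K" using real_arch_simple by blast
  have svm: "sv c \<in> borel_measurable borel" for c
    unfolding sv_def by (intro borel_measurable_continuous_onI continuous_intros)
  have key: "\<bar>measure L {\<omega>\<in>space L. X \<omega> \<in> box a b} - measure L {\<omega>\<in>space L. sv (1 / (real k + 1)) (X \<omega>) \<in> box (sv (1 / (real k + 1)) a) (sv (1 / (real k + 1)) b)}\<bar>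
      \<le> measure L {\<omega>\<in>space L. X \<omega> \<notin> Ck k}"
    if L: "prob_space L" and X: "X \<in> borel_measurable L" and k: "K \<le> k" for L :: "'c measure" and X k
  proof -
    interpret prob_space L by fact
    define c where "c = 1 / (real k + 1)"
    have ab: "\<bar>a $ j\<bar> \<le> real k + 1" "\<bar>b $ j\<bar> \<le> real k + 1" for j
      using component_le_norm_cart[of a j] component_le_norm_cart[of b j] K k norm_ge_zero[of a] norm_ge_zero[of b]
      by (smt (verit) of_nat_mono)+
    have iff: "z \<in> box a b \<longleftrightarrow> sv c z \<in> box (sv c a) (sv c b)" if "z \<in> Ck k" for z
      using that ab unfolding mem_Ck mem_box_cart sv_def
      by (simp add: sin_equiv[OF c_def])
    show ?thesis
      unfolding c_def[symmetric]
    proof (rule meas_diff_le)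
      show "finite_measure L" by (rule finite_measure_axioms)
      show "{\<omega>\<in>space L. X \<omega> \<in> box a b} \<in> sets L"
        using X by measurable
      show "{\<omega>\<in>space L. sv c (X \<omega>) \<in> box (sv c a) (sv c b)} \<in> sets L"
        using measurable_compose[OF X svm] by measurable
      show "{\<omega>\<in>space L. X \<omega> \<notin> Ck k} \<in> sets L"
      proof -
        have "{\<omega>\<in>space L. X \<omega> \<notin> Ck k} = X -` (- Ck k) \<inter> space L" by auto
        also have "\<dots> \<in> sets L"
          by (rule measurable_sets[OF X]) (auto simp: Ck_def intro!: borel_open)
        finally show ?thesis .
      qed
    qed (use iff in auto)
  qed
  let ?A = "\<lambda>k. measure M {\<omega>\<in>space M. sv (1 / (real k + 1)) (V \<omega>) \<in> box (sv (1 / (real k + 1)) a) (sv (1 / (real k + 1)) b)}"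
  let ?A' = "\<lambda>k. measure N {\<omega>\<in>space N. sv (1 / (real k + 1)) (V' \<omega>) \<in> box (sv (1 / (real k + 1)) a) (sv (1 / (real k + 1)) b)}"
  have AA: "?A k = ?A' k" for k by (rule box_prob_W[OF M N V V' eq])
  let ?d = "\<lambda>k. measure M {\<omega>\<in>space M. V \<omega> \<notin> Ck k} + measure N {\<omega>\<in>space N. V' \<omega> \<notin> Ck k}"
  have bnd: "\<bar>measure M {\<omega>\<in>space M. V \<omega> \<in> box a b} - measure N {\<omega>\<in>space N. V' \<omega> \<in> box a b}\<bar> \<le> ?d k"
    if "K \<le> k" for k
    using key[OF M V that] key[OF N V' that] AA[of k] by linarith
  have d0: "?d \<longlonglongrightarrow> 0" using tendsto_add[OF tail_zero[OF M V] tail_zero[OF N V']] by simp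
  have "\<bar>measure M {\<omega>\<in>space M. V \<omega> \<in> box a b} - measure N {\<omega>\<in>space N. V' \<omega> \<in> box a b}\<bar> \<le> 0"
    by (rule LIMSEQ_le_const[OF d0]) (use bnd in auto)
  then show ?thesis by simp
qed

lemma cramer_wold:
  fixes V :: "'a \<Rightarrow> real^'p" and V' :: "'b \<Rightarrow> real^'p"
  assumes M: "prob_space M" and N: "prob_space N"
    and V: "V \<in> borel_measurable M" and V': "V' \<in> borel_measurable N"
    and eq: "\<And>u. distr M borel (\<lambda>\<omega>. u \<bullet> V \<omega>) = distr N borel (\<lambda>\<omega>. u \<bullet> V' \<omega>)"
  shows "distr M borel V = distr N borel V'"
proof (rule measure_eqI_generator_eq)
  interpret M: prob_space M by fact
  interpret N: prob_space N by fact
  let ?E = "range (\<lambda>(a, b). box a b::(real^'p) set)"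
  show "Int_stable ?E"
    by (auto simp: Int_stable_def box_Int_box)
  show "?E \<subseteq> Pow UNIV" by auto
  show "sets (distr M borel V) = sigma_sets UNIV ?E" "sets (distr N borel V') = sigma_sets UNIV ?E"
    by (simp_all add: borel_eq_box)
  let ?A = "\<lambda>n::nat. box (- (real n *\<^sub>R One)) (real n *\<^sub>R One) :: (real^'p) set"
  show "range ?A \<subseteq> ?E" "(\<Union>i. ?A i) = UNIV"
    unfolding UN_box_eq_UNIV by auto
  show "emeasure (distr M borel V) (?A i) \<noteq> \<infinity>" for i
    using V by (simp add: emeasure_distr)
  show "emeasure (distr M borel V) X = emeasure (distr N borel V') X" if "X \<in> ?E" for X
  proof -
    obtain a b where X: "X = box a b" using \<open>X \<in> ?E\<close> by auto
    have "emeasure (distr M borel V) X = emeasure M {\<omega>\<in>space M. V \<omega> \<in> box a b}"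
      using V by (simp add: emeasure_distr X vimage_def Int_def conj_commute)
    also have "\<dots> = ennreal (measure M {\<omega>\<in>space M. V \<omega> \<in> box a b})"
      by (simp add: M.emeasure_eq_measure)
    also have "\<dots> = ennreal (measure N {\<omega>\<in>space N. V' \<omega> \<in> box a b})"
      by (simp add: box_prob_V[OF M N V V' eq])
    also have "\<dots> = emeasure N {\<omega>\<in>space N. V' \<omega> \<in> box a b}"
      by (simp add: N.emeasure_eq_measure)
    also have "\<dots> = emeasure (distr N borel V') X"
      using V' by (simp add: emeasure_distr X vimage_def Int_def conj_commute)
    finally show ?thesis .
  qed
qed




lemma inner_transpose: "(transpose (A::real^'m^'k) *v y) \<bullet> x = y \<bullet> (A *v x)"
  by (simp add: dot_lmul_matrix)

lemma scaleR_mat_vec: "((k::real) *\<^sub>R (A::real^'n^'m)) *v v = k *\<^sub>R (A *v v)"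
  by (simp add: matrix_vector_mult_def vec_eq_iff sum_distrib_left mult.assoc)
definition Gm :: "real^'p^'n \<Rightarrow> real \<Rightarrow> real^'p^'p" where
  "Gm X lam = Sigma_hat X + lam *\<^sub>R mat 1"

lemma inner_vmul: "x \<bullet> (y v* (A::real^'m^'k)) = y \<bullet> (A *v x)"
  by (metis dot_lmul_matrix inner_commute)

lemma Gm_ker:
  fixes X :: "real^'p^'n"
  assumes lam: "lam > 0" and x: "Gm X lam *v x = 0"
  shows "x = 0"
proof -
  have "x \<bullet> (Gm X lam *v x) = (1 / real CARD('n)) * ((X *v x) \<bullet> (X *v x)) + lam * (x \<bullet> x)"
    unfolding Gm_def Sigma_hat_def
    by (simp add: matrix_vector_mult_add_rdistrib scaleR_mat_vec matrix_vector_mul_assoc[symmetric]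
        inner_add_right inner_vmul)
  then have "0 = (1 / real CARD('n)) * ((X *v x) \<bullet> (X *v x)) + lam * (x \<bullet> x)" using x by simp
  moreover have "0 \<le> (1 / real CARD('n)) * ((X *v x) \<bullet> (X *v x))" by simp
  ultimately have "lam * (x \<bullet> x) \<le> 0" by linarith
  then have "x \<bullet> x \<le> 0" using lam by (simp add: mult_le_0_iff)
  then show "x = 0" using inner_ge_zero[of x] inner_eq_zero_iff[of x] by linarith
qed

lemma Gm_inv:
  fixes X :: "real^'p^'n"
  assumes lam: "lam > 0"
  shows "Gm X lam ** matrix_inv (Gm X lam) = mat 1" "matrix_inv (Gm X lam) ** Gm X lam = mat 1"
proof -
  obtain B where B: "B ** Gm X lam = mat 1"
    using matrix_left_invertible_ker[of "Gm X lam"] Gm_ker[OF lam] by blast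
  then have "Gm X lam ** B = mat 1" using matrix_left_right_inverse by blast
  with B have ex: "\<exists>A'. Gm X lam ** A' = mat 1 \<and> A' ** Gm X lam = mat 1" by blast
  show "Gm X lam ** matrix_inv (Gm X lam) = mat 1" "matrix_inv (Gm X lam) ** Gm X lam = mat 1"
    using someI_ex[OF ex] unfolding matrix_inv_def by auto
qed

lemma Sigma_hat_sym: "transpose (Sigma_hat (X::real^'p^'n)) = Sigma_hat X"
  unfolding Sigma_hat_def by (simp add: transpose_scalar matrix_transpose_mul)

lemma transpose_add_mat: "transpose (A + B) = transpose A + transpose (B::real^'n^'n)"
  by (simp add: transpose_def vec_eq_iff)

lemma Gm_sym: "transpose (Gm (X::real^'p^'n) lam) = Gm X lam"
  unfolding Gm_def by (simp add: transpose_add_mat Sigma_hat_sym transpose_scalar)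

lemma inv_sym:
  fixes X :: "real^'p^'n"
  assumes lam: "lam > 0"
  shows "transpose (matrix_inv (Gm X lam)) = matrix_inv (Gm X lam)"
proof -
  let ?G = "Gm X lam" and ?A = "matrix_inv (Gm X lam)"
  have "transpose ?A ** ?G = mat 1"
    using arg_cong[OF Gm_inv(1)[OF lam], of transpose] by (simp add: matrix_transpose_mul Gm_sym)
  then have "transpose ?A = transpose ?A ** (?G ** ?A)" using Gm_inv(1)[OF lam, of X] by simp
  also have "\<dots> = (transpose ?A ** ?G) ** ?A" by (simp add: matrix_mul_assoc)
  also have "\<dots> = ?A" using \<open>transpose ?A ** ?G = mat 1\<close> by simp
  finally show ?thesis .
qed

definition Bm :: "real^'p^'n \<Rightarrow> real \<Rightarrow> real^'n^'p" where
  "Bm X lam = (1 / real CARD('n)) *\<^sub>R (matrix_inv (Gm X lam) ** transpose X)"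

lemma ridge_Bm: "ridge (X::real^'p^'n) lam Y = Bm X lam *v Y"
  unfolding ridge_def Bm_def Gm_def[symmetric]
  by (simp add: scaleR_mat_vec matrix_vector_mult_scaleR matrix_vector_mul_assoc[symmetric] del: transpose_matrix_vector)

lemma Bm_cov:
  fixes X :: "real^'p^'n"
  assumes lam: "lam > 0"
  shows "Bm X lam ** transpose (Bm X lam) = (1 / real CARD('n)) *\<^sub>R Omega X lam"
proof -
  let ?A = "matrix_inv (Gm X lam)"
  have "Bm X lam ** transpose (Bm X lam) = ((1 / real CARD('n)) * (1 / real CARD('n))) *\<^sub>R (?A ** transpose X ** (X ** ?A))"
    unfolding Bm_def
    by (simp add: transpose_scalar matrix_transpose_mul inv_sym[OF lam] scalar_matrix_assoc[symmetric]
        matrix_scalar_ac matrix_mul_assoc)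
  also have "\<dots> = (1 / real CARD('n)) *\<^sub>R (?A ** Sigma_hat X ** ?A)"
    unfolding Sigma_hat_def
    by (simp add: scalar_matrix_assoc[symmetric] matrix_scalar_ac matrix_mul_assoc)
  finally show ?thesis unfolding Omega_def Gm_def .
qed




lemma distr_lborel_borel: "distr M lborel f = distr M borel f"
  by (simp add: distr_def)

lemma lin_gauss:
  fixes eps :: "'a \<Rightarrow> real^'n" and c :: "real^'n"
  assumes M: "prob_space M"
    and indep: "prob_space.indep_vars M (\<lambda>_. borel) (\<lambda>i \<omega>. eps \<omega> $ i) UNIV"
    and normal: "\<forall>i. distributed M lborel (\<lambda>\<omega>. eps \<omega> $ i) (normal_density 0 sg)"
    and sg: "sg > 0"
  shows "distr M borel (\<lambda>\<omega>. c \<bullet> eps \<omega>) = gauss_law 0 (sg\<^sup>2 * (c \<bullet> c))"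
proof -
  interpret prob_space M by fact
  define I where "I = {i. c $ i \<noteq> 0}"
  have sumI: "(\<Sum>i\<in>UNIV. f i) = (\<Sum>i\<in>I. f i)" if "\<And>i. c $ i = 0 \<Longrightarrow> f i = 0" for f :: "'n \<Rightarrow> real"
    by (rule sum.mono_neutral_right) (auto simp: I_def that)
  have ce: "c \<bullet> eps \<omega> = (\<Sum>i\<in>I. c $ i * eps \<omega> $ i)" for \<omega>
    unfolding inner_vec_def by (simp add: sumI)
  have cc: "c \<bullet> c = (\<Sum>i\<in>I. (c $ i)\<^sup>2)"
    unfolding inner_vec_def by (simp add: sumI power2_eq_square)
  show ?thesis
  proof (cases "I = {}")
    case True
    then have "c \<bullet> c = 0" "\<And>\<omega>. c \<bullet> eps \<omega> = 0" using cc ce by auto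
    then show ?thesis by (simp add: gauss_law_def)
  next
    case False
    have ind: "indep_vars (\<lambda>_. borel) (\<lambda>i \<omega>. c $ i * eps \<omega> $ i) I"
      using indep_vars_compose2[OF indep_vars_subset[OF indep, of I], of "\<lambda>i x. c $ i * x" "\<lambda>_. borel"]
      by auto
    have nd: "distributed M lborel (\<lambda>\<omega>. c $ i * eps \<omega> $ i) (normal_density 0 (\<bar>c $ i\<bar> * sg))"
      if "i \<in> I" for i
      using normal_density_affine[OF normal[rule_format, of i] sg, of "c $ i" 0] that by (simp add: I_def)
    have "distributed M lborel (\<lambda>\<omega>. \<Sum>i\<in>I. c $ i * eps \<omega> $ i)
        (normal_density (\<Sum>i\<in>I. 0) (sqrt (\<Sum>i\<in>I. (\<bar>c $ i\<bar> * sg)\<^sup>2)))"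
      by (rule sum_indep_normal[OF _ False ind]) (use sg nd in \<open>auto simp: I_def\<close>)
    moreover have "(\<Sum>i\<in>I. (\<bar>c $ i\<bar> * sg)\<^sup>2) = sg\<^sup>2 * (c \<bullet> c)"
      by (simp add: cc power_mult_distrib sum_distrib_left mult.commute)
    ultimately have D: "distributed M lborel (\<lambda>\<omega>. c \<bullet> eps \<omega>) (normal_density 0 (sqrt (sg\<^sup>2 * (c \<bullet> c))))"
      by (simp add: ce)
    have pos: "sg\<^sup>2 * (c \<bullet> c) \<noteq> 0"
      using False sg by (auto simp: I_def)
    have c0: "c \<noteq> 0" using False by (auto simp: I_def)
    show ?thesis
      using D sg c0 unfolding distributed_def gauss_law_def by (simp add: distr_lborel_borel)
  qed
qed




abbreviation "PhiD \<equiv> density lborel std_normal_density"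

lemma PhiD_prob: "prob_space PhiD"
  by (rule prob_space_normal_density) simp

lemma Phi_mono: "x \<le> y \<Longrightarrow> Phi x \<le> Phi y"
proof -
  assume "x \<le> y"
  interpret prob_space PhiD by (rule PhiD_prob)
  show ?thesis unfolding Phi_def
    by (rule finite_measure_mono) (use \<open>x \<le> y\<close> in auto)
qed

lemma Phi_nonneg: "0 \<le> Phi x"
  unfolding Phi_def by simp

lemma Phi_le1: "Phi x \<le> 1"
proof -
  interpret prob_space PhiD by (rule PhiD_prob)
  show ?thesis unfolding Phi_def by (rule prob_le_1)
qed

lemma std_normal_le: "std_normal_density x \<le> 1 / sqrt (2 * pi)"
proof -
  have "exp (- x\<^sup>2 / 2) \<le> 1" by simp
  then show ?thesis unfolding std_normal_density_def
    by (simp add: divide_right_mono)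
qed

lemma Phi_lip:
  assumes d: "0 \<le> d"
  shows "Phi (x + d) \<le> Phi x + d / sqrt (2 * pi)"
proof -
  interpret prob_space PhiD by (rule PhiD_prob)
  have "{..x + d} = {..x} \<union> {x<..x+d}" using d by auto
  then have "Phi (x + d) = Phi x + measure PhiD {x<..x+d}"
    unfolding Phi_def by (simp, subst finite_measure_Union) auto
  moreover have "measure PhiD {x<..x+d} \<le> d / sqrt (2 * pi)"
  proof -
    have "emeasure PhiD {x<..x+d} = (\<integral>\<^sup>+ y. ennreal (std_normal_density y) * indicator {x<..x+d} y \<partial>lborel)"
      by (rule emeasure_density) auto
    also have "\<dots> \<le> (\<integral>\<^sup>+ y. ennreal (1 / sqrt (2 * pi)) * indicator {x<..x+d} y \<partial>lborel)"
      by (intro nn_integral_mono mult_right_mono) (auto simp: std_normal_le)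
    also have "\<dots> = ennreal (1 / sqrt (2 * pi)) * emeasure lborel {x<..x+d}"
      by (rule nn_integral_cmult_indicator) auto
    also have "\<dots> = ennreal (d / sqrt (2 * pi))"
      using d by (simp add: ennreal_mult'[symmetric])
    finally have "ennreal (measure PhiD {x<..x+d}) \<le> ennreal (d / sqrt (2 * pi))"
      by (simp add: emeasure_eq_measure)
    then show ?thesis using d by (simp add: ennreal_le_iff)
  qed
  ultimately show ?thesis by simp
qed

lemma Phi_measurable: "Phi \<in> borel_measurable borel"
  by (rule borel_measurable_mono) (simp add: mono_def Phi_mono)

lemma powr_half: "(2 * pi) powr (-1/2) = 1 / sqrt (2 * pi)"
  by (simp add: powr_minus_divide powr_half_sqrt)




theorem proposition4:
  fixes M :: "'a measure" and N :: "'b measure"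
    and X :: "real^'p^'n" and beta0 :: "real^'p" and eps :: "'a \<Rightarrow> real^'n"
    and sg lam zeta alpha :: real and Delta :: "'p \<Rightarrow> real"
    and g :: "real^'n \<Rightarrow> real^'p" and Z :: "'b \<Rightarrow> real^'p"
  assumes M: "prob_space M"
    and eps_indep: "prob_space.indep_vars M (\<lambda>_. borel) (\<lambda>i \<omega>. eps \<omega> $ i) UNIV"
    and eps_normal: "\<forall>i. distributed M lborel (\<lambda>\<omega>. eps \<omega> $ i) (normal_density 0 sg)"
    and sg: "sg > 0"
    and lam: "lam > 0"
    and Omega_min: "\<forall>j. Omega X lam $ j $ j > 0"
    and g: "g \<in> borel_measurable borel"
    and Delta: "\<forall>j. Delta j > 0"
    and zeta: "zeta \<ge> 0"
    and N: "prob_space N"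
    and Z: "centered_gaussian_vec N Z ((sg\<^sup>2 / real CARD('n)) *\<^sub>R Omega X lam)"
    and alpha: "0 < alpha" "alpha < 1"
  defines "Y \<equiv> \<lambda>\<omega>. X *v beta0 + eps \<omega>"
  defines "bhat \<equiv> \<lambda>\<omega>. ridge X lam (Y \<omega>)"
  defines "binit \<equiv> \<lambda>\<omega>. g (Y \<omega>)"
  defines "PX \<equiv> proj_X X"
  defines "theta0 \<equiv> PX *v beta0"
  defines "a \<equiv> a_np X lam sg"
  defines "bias \<equiv> \<lambda>j. (\<integral>\<omega>. bhat \<omega> $ j \<partial>M) - theta0 $ j"
  defines "abinf \<equiv> Max (range (\<lambda>j. a j * \<bar>bias j\<bar>))"
  defines "bcorr \<equiv> \<lambda>\<omega> j. bhat \<omega> $ j - (\<Sum>k\<in>UNIV - {j}. PX $ j $ k * binit \<omega> $ k)"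
  defines "Pj \<equiv> \<lambda>\<omega> j. 2 * (1 - Phi (max 0 (a j * \<bar>bcorr \<omega> j\<bar> - Delta j)))"
  defines "F \<equiv> FZ N Z X lam sg"
  defines "Pcorr \<equiv> \<lambda>\<omega> j. F (Pj \<omega> j + zeta)"
  defines "E \<equiv> {\<omega> \<in> space M. \<forall>j. \<bar>a j * (\<Sum>k\<in>UNIV - {j}. PX $ j $ k * (binit \<omega> $ k - beta0 $ k))\<bar> \<le> Delta j}"
  defines "V \<equiv> \<lambda>\<omega>. {j. Pcorr \<omega> j \<le> alpha} \<inter> {j. beta0 $ j = 0}"
  shows "measure M {\<omega> \<in> space M. card (V \<omega>) > 0}
           \<le> F (FZinv F alpha - zeta + 2 * (2 * pi) powr (-1/2) * abinf) + (1 - measure M E)"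
proof -
  interpret M: prob_space M by (rule M)
  interpret N: prob_space N by (rule N)
  define B where "B = Bm X lam"
  define Z' where "Z' = (\<lambda>\<omega>. B *v eps \<omega>)"
  define m where "m = B *v (X *v beta0)"
  define C where "C = (sg\<^sup>2 / real CARD('n)) *\<^sub>R Omega X lam"
  have npos: "real CARD('n) > 0" by simp
  have apos: "a j > 0" for j
  proof -
    have "0 < Omega X lam $ j $ j" using Omega_min by blast
    then show ?thesis unfolding a_def a_np_def using sg by simp
  qed
  have em_i: "(\<lambda>\<omega>. eps \<omega> $ i) \<in> borel_measurable M" for i
  proof -
    have "distributed M lborel (\<lambda>\<omega>. eps \<omega> $ i) (normal_density 0 sg)" using eps_normal by blast
    then have "(\<lambda>\<omega>. eps \<omega> $ i) \<in> measurable M lborel" unfolding distributed_def by blast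
    then show ?thesis by simp
  qed
  have em: "eps \<in> borel_measurable M"
  proof (rule borel_measurable_euclidean_space[THEN iffD2], intro ballI)
    fix b :: "real^'n" assume "b \<in> Basis"
    then have "\<exists>i. b = axis i 1" by (auto simp: Basis_vec_def)
    then obtain i where b: "b = axis i 1" by blast
    have "(\<lambda>\<omega>. eps \<omega> \<bullet> b) = (\<lambda>\<omega>. eps \<omega> $ i)" unfolding b by (simp add: inner_axis)
    then show "(\<lambda>\<omega>. eps \<omega> \<bullet> b) \<in> borel_measurable M" using em_i by metis
  qed
  have Z'm: "Z' \<in> borel_measurable M"
    unfolding Z'_def
    using measurable_compose[OF em borel_measurable_continuous_onI[OF matrix_vector_mult_linear_continuous_on[of UNIV B]]]
    by simp
  have Zm: "Z \<in> borel_measurable N" and Zlaw: "\<And>u. distr N borel (\<lambda>\<omega>. u \<bullet> Z \<omega>) = gauss_law 0 (u \<bullet> (C *v u))"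
    using Z unfolding centered_gaussian_vec_def C_def by auto
  have Z'law: "distr M borel (\<lambda>\<omega>. u \<bullet> Z' \<omega>) = gauss_law 0 (u \<bullet> (C *v u))" for u
  proof -
    define c where "c = transpose B *v u"
    have "\<And>\<omega>. u \<bullet> Z' \<omega> = c \<bullet> eps \<omega>"
      unfolding Z'_def c_def by (simp add: dot_lmul_matrix)
    then have "distr M borel (\<lambda>\<omega>. u \<bullet> Z' \<omega>) = gauss_law 0 (sg\<^sup>2 * (c \<bullet> c))"
      using lin_gauss[OF M eps_indep eps_normal sg, of c] by simp
    moreover have "c \<bullet> c = u \<bullet> ((B ** transpose B) *v u)"
    proof -
      have "c \<bullet> c = (u v* B) \<bullet> c" unfolding c_def by simp
      also have "\<dots> = u \<bullet> (B *v c)" by (rule dot_lmul_matrix)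
      also have "\<dots> = u \<bullet> ((B ** transpose B) *v u)"
        unfolding c_def by (simp only: matrix_vector_mul_assoc)
      finally show ?thesis .
    qed
    moreover have "B ** transpose B = (1 / real CARD('n)) *\<^sub>R Omega X lam"
      unfolding B_def by (rule Bm_cov[OF lam])
    ultimately show ?thesis
      unfolding C_def by (simp add: scaleR_mat_vec)
  qed
  have law: "distr M borel Z' = distr N borel Z"
    by (rule cramer_wold[OF M N Z'm Zm]) (simp add: Zlaw Z'law)
  have bhat_eq: "bhat \<omega> = m + Z' \<omega>" for \<omega>
    unfolding bhat_def Y_def m_def Z'_def B_def by (simp add: ridge_Bm matrix_vector_right_distrib)
  have Z'comp: "Z' \<omega> $ j = (\<Sum>i\<in>UNIV. B $ j $ i * eps \<omega> $ i)" for \<omega> j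
    unfolding Z'_def by (simp add: matrix_vector_mult_def)
  have inl: "integrable lborel (\<lambda>x. normal_density 0 sg x * x)"
    by (rule integrable_normal_moment_nz_1) (rule sg)
  have int_i: "integrable M (\<lambda>\<omega>. eps \<omega> $ i)" for i
    using distributed_integrable[OF eps_normal[rule_format, of i], of "\<lambda>x. x"] inl by simp
  have exp_i: "(\<integral>\<omega>. eps \<omega> $ i \<partial>M) = 0" for i
    using M.normal_distributed_expectation[OF sg eps_normal[rule_format, of i]] by simp
  have mean: "(\<integral>\<omega>. bhat \<omega> $ j \<partial>M) = m $ j" for j
  proof -
    have "(\<integral>\<omega>. bhat \<omega> $ j \<partial>M) = (\<integral>\<omega>. m $ j + (\<Sum>i\<in>UNIV. B $ j $ i * eps \<omega> $ i) \<partial>M)"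
      by (simp add: bhat_eq Z'comp)
    also have "\<dots> = m $ j + (\<Sum>i\<in>UNIV. B $ j $ i * (\<integral>\<omega>. eps \<omega> $ i \<partial>M))"
      using int_i by (simp add: Bochner_Integration.integral_add Bochner_Integration.integral_sum M.prob_space)
    also have "\<dots> = m $ j" by (simp add: exp_i)
    finally show ?thesis .
  qed
  have bias_eq: "bias j = m $ j - theta0 $ j" for j
    unfolding bias_def mean ..
  have abinf_ge: "a j * \<bar>bias j\<bar> \<le> abinf" for j
    unfolding abinf_def by (rule Max_ge) auto
  have abinf_nn: "0 \<le> abinf"
    using abinf_ge[of undefined] apos[of undefined] by (smt (verit) mult_nonneg_nonneg abs_ge_zero)
  define q where "q = (\<lambda>z j. 2 * (1 - Phi (a j * \<bar>(z::real^'p) $ j\<bar>)))"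
  define Qmin where "Qmin = (\<lambda>z. Min (range (q z)))"
  have Fdef: "F c = measure N {\<omega>\<in>space N. Qmin (Z \<omega>) \<le> c}" for c
    unfolding F_def FZ_def Qmin_def q_def a_def ..
  have F1: "F c = 1" if "2 \<le> c" for c
  proof -
    have "Qmin (Z \<omega>) \<le> c" for \<omega>
    proof -
      have "Qmin (Z \<omega>) \<le> q (Z \<omega>) undefined" unfolding Qmin_def by (rule Min_le) auto
      also have "\<dots> \<le> 2" unfolding q_def using Phi_nonneg by simp
      finally show ?thesis using that by simp
    qed
    then show ?thesis unfolding Fdef by (simp add: N.prob_space)
  qed
  have Finv: "x \<le> FZinv F alpha" if "F x \<le> alpha" for x
    unfolding FZinv_def
  proof (rule cSup_upper)
    show "x \<in> {c. F c \<le> alpha}" using that by simp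
    show "bdd_above {c. F c \<le> alpha}"
    proof (rule bdd_aboveI)
      fix c assume "c \<in> {c. F c \<le> alpha}"
      then show "c \<le> 2" using F1[of c] alpha by force
    qed
  qed
  define t where "t = FZinv F alpha - zeta + 2 * (2 * pi) powr (-1/2) * abinf"
  have key: "Qmin (Z' \<omega>) \<le> t" if w: "\<omega> \<in> E" and j: "j \<in> V \<omega>" for \<omega> j
  proof -
    from j have jF: "F (Pj \<omega> j + zeta) \<le> alpha" and b0: "beta0 $ j = 0"
      unfolding V_def Pcorr_def by auto
    have h1: "Pj \<omega> j + zeta \<le> FZinv F alpha" using Finv[OF jF] .
    define S where "S = (\<Sum>k\<in>UNIV - {j}. PX $ j $ k * (binit \<omega> $ k - beta0 $ k))"
    have th: "theta0 $ j = (\<Sum>k\<in>UNIV - {j}. PX $ j $ k * beta0 $ k)"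
      unfolding theta0_def by (simp add: matrix_vector_mult_def sum.remove[of UNIV j] b0)
    have h2: "bcorr \<omega> j = Z' \<omega> $ j + bias j - S"
      unfolding bcorr_def S_def bias_eq bhat_eq th
      by (simp add: right_diff_distrib sum_subtractf)
    have h3: "\<bar>a j * S\<bar> \<le> Delta j" using w unfolding E_def S_def by auto
    have h4: "a j * \<bar>bcorr \<omega> j\<bar> \<le> a j * \<bar>Z' \<omega> $ j\<bar> + abinf + Delta j"
    proof -
      have e1: "a j * \<bar>bcorr \<omega> j\<bar> = \<bar>a j * bcorr \<omega> j\<bar>"
        using apos[of j] by (simp add: abs_mult)
      have e2: "a j * bcorr \<omega> j = a j * Z' \<omega> $ j + a j * bias j - a j * S"
        by (simp add: h2 algebra_simps)
      have "a j * \<bar>bcorr \<omega> j\<bar> = \<bar>a j * Z' \<omega> $ j + a j * bias j - a j * S\<bar>"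
        by (simp only: e1 e2)
      also have "\<dots> \<le> \<bar>a j * Z' \<omega> $ j\<bar> + \<bar>a j * bias j\<bar> + \<bar>a j * S\<bar>" by linarith
      also have "\<dots> = a j * \<bar>Z' \<omega> $ j\<bar> + a j * \<bar>bias j\<bar> + \<bar>a j * S\<bar>"
        using apos[of j] by (simp add: abs_mult)
      finally show ?thesis using h3 abinf_ge[of j] by linarith
    qed
    have h5: "max 0 (a j * \<bar>bcorr \<omega> j\<bar> - Delta j) \<le> a j * \<bar>Z' \<omega> $ j\<bar> + abinf"
      using h4 abinf_nn apos[of j] by (simp add: zero_le_mult_iff)
    have h6: "Phi (max 0 (a j * \<bar>bcorr \<omega> j\<bar> - Delta j)) \<le> Phi (a j * \<bar>Z' \<omega> $ j\<bar>) + abinf / sqrt (2 * pi)"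
      using Phi_mono[OF h5] Phi_lip[OF abinf_nn, of "a j * \<bar>Z' \<omega> $ j\<bar>"] by linarith
    have "q (Z' \<omega>) j \<le> Pj \<omega> j + 2 * (abinf / sqrt (2 * pi))"
    proof -
      have gen: "2 * (1 - pa) \<le> 2 * (1 - pb) + 2 * dd" if "pb \<le> pa + dd" for pa pb dd :: real
        using that by (simp add: algebra_simps)
      show ?thesis unfolding q_def Pj_def by (rule gen[OF h6])
    qed
    also have "\<dots> \<le> t"
    proof -
      have e: "2 * (1 / sqrt (2*pi)) * abinf = 2 * (abinf / sqrt (2*pi))" by simp
      show ?thesis unfolding t_def powr_half e using h1 by linarith
    qed
    finally have "q (Z' \<omega>) j \<le> t" .
    moreover have "Qmin (Z' \<omega>) \<le> q (Z' \<omega>) j" unfolding Qmin_def by (rule Min_le) auto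
    ultimately show ?thesis by linarith
  qed
  define L where "L = {\<omega> \<in> space M. card (V \<omega>) > 0}"
  define T where "T = {\<omega> \<in> space M. Qmin (Z' \<omega>) \<le> t}"
  define Sset where "Sset = {z. Qmin z \<le> t}"
  have Sset_eq: "Sset = {z. \<exists>j. q z j \<le> t}"
    unfolding Sset_def Qmin_def by (auto simp: Min_le_iff)
  have Phim[measurable]: "Phi \<in> borel_measurable borel" by (rule Phi_measurable)
  have Sset_m: "Sset \<in> sets borel"
    unfolding Sset_eq q_def by measurable
  have T_eq: "T = Z' -` Sset \<inter> space M" unfolding T_def Sset_def by auto
  have T_m: "T \<in> sets M" unfolding T_eq by (rule measurable_sets[OF Z'm Sset_m])
  have FT: "measure M T = F t"
  proof -
    have "measure M T = measure (distr M borel Z') Sset"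
      unfolding T_eq by (rule measure_distr[OF Z'm Sset_m, symmetric])
    also have "\<dots> = measure (distr N borel Z) Sset" by (simp add: law)
    also have "\<dots> = measure N (Z -` Sset \<inter> space N)" by (rule measure_distr[OF Zm Sset_m])
    also have "\<dots> = F t" unfolding Fdef Sset_def by (simp add: vimage_def Int_def conj_commute)
    finally show ?thesis .
  qed
  have Ft_nn: "0 \<le> F t" unfolding Fdef by simp
  have incl: "L \<subseteq> (space M - E) \<union> T"
  proof
    fix \<omega> assume "\<omega> \<in> L"
    then have w: "\<omega> \<in> space M" and "card (V \<omega>) > 0" unfolding L_def by auto
    then obtain j where "j \<in> V \<omega>" by (metis card.empty ex_in_conv less_irrefl)
    then show "\<omega> \<in> (space M - E) \<union> T"
      using key[of \<omega> j] w unfolding T_def by auto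
  qed
  have final: "measure M L \<le> F t + (1 - measure M E)"
  proof (cases "L \<in> sets M \<and> E \<in> sets M")
    case True
    have "measure M L \<le> measure M ((space M - E) \<union> T)"
      using incl True T_m by (intro M.finite_measure_mono) auto
    also have "\<dots> \<le> measure M (space M - E) + measure M T"
      using True T_m by (intro measure_Un_le) auto
    also have "\<dots> = (1 - measure M E) + F t"
      using True by (simp add: M.prob_compl FT)
    finally show ?thesis by simp
  next
    case False
    then have "L \<notin> sets M \<or> E \<notin> sets M" by blast
    then show ?thesis
    proof
      assume "L \<notin> sets M"
      then have "measure M L = 0" by (simp add: measure_notin_sets)
      moreover have "measure M E \<le> 1" by (rule M.prob_le_1)
      ultimately show ?thesis using Ft_nn by linarith
    next
      assume "E \<notin> sets M"
      then have "measure M E = 0" by (simp add: measure_notin_sets)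
      moreover have "measure M L \<le> 1" by (rule M.prob_le_1)
      ultimately show ?thesis using Ft_nn by linarith
    qed
  qed
  then show ?thesis unfolding L_def t_def .
qed


end
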